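(* Let $(X,d)$ be a metric space, $F$ a semiflow on $X$, $\varepsilon>0$, $x\in X$, and let $\gamma:[0,T]\to X$ be an $\varepsilon$-chain from $x$ to $x$. Then there exists $\tau_*>0$ such that for every $T'\in(T-\tau_*,T)$ with $T'\ge1$ there is a $4\varepsilon$-chain $\gamma':[0,T']\to X$ from $x$ to $x$.
   Context: A semiflow on a metric space $(X,d)$ is a continuous map $F:[0,\infty)\times X\to X$, $(t,x)\mapsto F^t(x)$, with $F^0=\mathrm{id}$ and $F^{t+s}=F^t\circ F^s$ for all $t,s\ge0$. A curve is piecewise continuous if it is continuous except at finitely many points, at which one-sided limits exist. For $T\ge1$, a piecewise continuous curve $\gamma:[0,T]\to X$ is $\varepsilon$-close to $F$ if $d(\gamma(t+\tau),F^\tau(\gamma(t)))<\varepsilon$ for every $\tau\in[0,1]$ and $t\in[0,T-\tau]$. An $\varepsilon$-chain from $x$ to $y$ is a piecewise continuous $\gamma:[0,T]\to X$, $T\ge 1$, with $\gamma(0)=x$, $\gamma(T)=y$, and $\gamma$ $\varepsilon$-close to $F$. *)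

theory Defs
  imports "HOL-Analysis.Analysis"
begin

text \<open>A semiflow on a metric space: a jointly continuous map
  F : [0,inf) x X -> X with F 0 = id and F (t+s) = F t o F s for t, s >= 0.
  Values of F at negative times are irrelevant.\<close>
definition semiflow :: "(real \<Rightarrow> 'a::metric_space \<Rightarrow> 'a) \<Rightarrow> bool" where
  "semiflow F \<longleftrightarrow>
     continuous_on ({0..} \<times> UNIV) (\<lambda>(t, x). F t x) \<and>
     F 0 = id \<and>
     (\<forall>t s. 0 \<le> t \<longrightarrow> 0 \<le> s \<longrightarrow> F (t + s) = F t \<circ> F s)"

definition piecewise_continuous_on :: "real \<Rightarrow> real \<Rightarrow> (real \<Rightarrow> 'a::metric_space) \<Rightarrow> bool" where
  "piecewise_continuous_on a b \<gamma> \<longleftrightarrow>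
     (\<exists>S. finite S \<and> S \<subseteq> {a..b} \<and>
        (\<forall>t\<in>{a..b} - S. continuous (at t within {a..b}) \<gamma>) \<and>
        (\<forall>t\<in>S. (a < t \<longrightarrow> (\<exists>l. (\<gamma> \<longlongrightarrow> l) (at_left t))) \<and>
                (t < b \<longrightarrow> (\<exists>l. (\<gamma> \<longlongrightarrow> l) (at_right t)))))"

definition eps_close :: "real \<Rightarrow> (real \<Rightarrow> 'a::metric_space \<Rightarrow> 'a) \<Rightarrow> real \<Rightarrow> (real \<Rightarrow> 'a) \<Rightarrow> bool" where
  "eps_close \<epsilon> F T \<gamma> \<longleftrightarrow>
     (\<forall>\<tau>\<in>{0..1}. \<forall>t\<in>{0..T - \<tau>}. dist (\<gamma> (t + \<tau>)) (F \<tau> (\<gamma> t)) < \<epsilon>)"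

definition eps_chain :: "real \<Rightarrow> (real \<Rightarrow> 'a::metric_space \<Rightarrow> 'a) \<Rightarrow> 'a \<Rightarrow> 'a \<Rightarrow> real \<Rightarrow> (real \<Rightarrow> 'a) \<Rightarrow> bool" where
  "eps_chain \<epsilon> F x y T \<gamma> \<longleftrightarrow>
     1 \<le> T \<and> piecewise_continuous_on 0 T \<gamma> \<and> \<gamma> 0 = x \<and> \<gamma> T = y \<and> eps_close \<epsilon> F T \<gamma>"

end

theory Submission
  imports Defs
begin

lemma pc_left_lim:
  fixes \<gamma> :: "real \<Rightarrow> 'a::metric_space"
  assumes "piecewise_continuous_on a b \<gamma>" "a < c" "c \<le> b"
  shows "\<exists>l. (\<gamma> \<longlongrightarrow> l) (at_left c)"
proof -
  obtain S where S: "finite S" "S \<subseteq> {a..b}"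
    "\<forall>t\<in>{a..b} - S. continuous (at t within {a..b}) \<gamma>"
    "\<forall>t\<in>S. (a < t \<longrightarrow> (\<exists>l. (\<gamma> \<longlongrightarrow> l) (at_left t))) \<and>
                (t < b \<longrightarrow> (\<exists>l. (\<gamma> \<longlongrightarrow> l) (at_right t)))"
    using assms(1) unfolding piecewise_continuous_on_def by blast
  show ?thesis
  proof (cases "c \<in> S")
    case True then show ?thesis using S(4) assms by blast
  next
    case False
    then have "continuous (at c within {a..b}) \<gamma>" using S(3) assms by auto
    then have "(\<gamma> \<longlongrightarrow> \<gamma> c) (at c within {a..b})" by (simp add: continuous_within)
    then have "(\<gamma> \<longlongrightarrow> \<gamma> c) (at c within {a..c})"
      by (rule tendsto_within_subset) (use assms in auto)
    then show ?thesis using assms(2) at_within_Icc_at_left by metis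
  qed
qed

theorem lemma3p4:
  fixes F :: "real \<Rightarrow> 'a::metric_space \<Rightarrow> 'a" and x :: 'a and \<gamma> :: "real \<Rightarrow> 'a"
  assumes "semiflow F" and "\<epsilon> > 0" and "eps_chain \<epsilon> F x x T \<gamma>"
  shows "\<exists>\<tau>\<^sub>s>0. \<forall>T'. T - \<tau>\<^sub>s < T' \<and> T' < T \<and> 1 \<le> T' \<longrightarrow>
           (\<exists>\<gamma>'. eps_chain (4 * \<epsilon>) F x x T' \<gamma>')"
proof -
  have T1: "1 \<le> T" and pc: "piecewise_continuous_on 0 T \<gamma>" and g0: "\<gamma> 0 = x"
    and gT: "\<gamma> T = x" and cl: "eps_close \<epsilon> F T \<gamma>"
    using assms(3) unfolding eps_chain_def by auto
  have Fc: "continuous_on ({0..} \<times> UNIV) (\<lambda>(t, x). F t x)" and F0: "F 0 = id"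
    using assms(1) unfolding semiflow_def by auto
  obtain L where L: "(\<gamma> \<longlongrightarrow> L) (at_left T)" using pc_left_lim[OF pc, of T] T1 by auto
  have lim1: "((\<lambda>s. (T - s, \<gamma> s)) \<longlongrightarrow> (0, L)) (at_left T)"
    by (intro tendsto_Pair L) (auto intro!: tendsto_eq_intros simp: at_left_eq)
  have ev1: "\<forall>\<^sub>F s in at_left T. (T - s, \<gamma> s) \<in> {0..} \<times> UNIV"
    unfolding eventually_at_left_field using T1 by (intro exI[of _ 0]) auto
  have "((\<lambda>s. (\<lambda>(t, x). F t x) (T - s, \<gamma> s)) \<longlongrightarrow> (\<lambda>(t, x). F t x) (0, L)) (at_left T)"
    by (rule continuous_on_tendsto_compose[OF Fc lim1 _ ev1]) auto
  then have lim2: "((\<lambda>s. F (T - s) (\<gamma> s)) \<longlongrightarrow> L) (at_left T)" using F0 by simp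
  have "((\<lambda>s. dist (F (T - s) (\<gamma> s)) (\<gamma> s)) \<longlongrightarrow> dist L L) (at_left T)"
    by (intro tendsto_dist lim2 L)
  then have "\<forall>\<^sub>F s in at_left T. dist (F (T - s) (\<gamma> s)) (\<gamma> s) < \<epsilon>"
    using assms(2) by (auto dest: order_tendstoD(2))
  moreover have "\<forall>\<^sub>F s in at_left T. s > max 0 (T - 1) \<and> s < T"
    unfolding eventually_at_left_field using T1 by (intro exI[of _ "max 0 (T - 1)"]) auto
  ultimately have "\<forall>\<^sub>F s in at_left T. dist (\<gamma> s) x < 2 * \<epsilon>"
  proof eventually_elim
    case (elim s)
    have "T - s \<in> {0..1}" "s \<in> {0..T - (T - s)}" using elim by auto
    then have "dist (\<gamma> (s + (T - s))) (F (T - s) (\<gamma> s)) < \<epsilon>"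
      using cl unfolding eps_close_def by blast
    then have "dist x (F (T - s) (\<gamma> s)) < \<epsilon>" using gT by simp
    then show ?case using elim(1) dist_triangle3[of "\<gamma> s" x "F (T - s) (\<gamma> s)"]
      by (simp add: dist_commute)
  qed
  then obtain b where b: "b < T" "\<And>y. b < y \<Longrightarrow> y < T \<Longrightarrow> dist (\<gamma> y) x < 2 * \<epsilon>"
    unfolding eventually_at_left_field by blast
  show ?thesis
  proof (intro exI[of _ "T - b"] conjI allI impI)
    show "0 < T - b" using b by simp
    fix T' assume T': "T - (T - b) < T' \<and> T' < T \<and> 1 \<le> T'"
    define \<gamma>' where "\<gamma>' = (\<lambda>t. if t = T' then x else \<gamma> t)"
    have dT': "dist (\<gamma> T') x < 2 * \<epsilon>" using b T' by auto
    have close: "eps_close (4 * \<epsilon>) F T' \<gamma>'"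
      unfolding eps_close_def
    proof (intro ballI)
      fix \<tau> t assume \<tau>: "\<tau> \<in> {0..1}" and t: "t \<in> {0..T' - \<tau>}"
      have c1: "dist (\<gamma> (t + \<tau>)) (F \<tau> (\<gamma> t)) < \<epsilon>"
        using cl \<tau> t T' unfolding eps_close_def by auto
      show "dist (\<gamma>' (t + \<tau>)) (F \<tau> (\<gamma>' t)) < 4 * \<epsilon>"
      proof (cases "t + \<tau> = T'")
        case False
        then have "t \<noteq> T'" using \<tau> t by auto
        then show ?thesis using False c1 assms(2) unfolding \<gamma>'_def by simp
      next
        case True
        show ?thesis
        proof (cases "t = T'")
          case True
          then have "\<tau> = 0" using \<open>t + \<tau> = T'\<close> by simp
          then show ?thesis using True F0 assms(2) unfolding \<gamma>'_def by simp
        next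
          case False
          have "dist x (F \<tau> (\<gamma> t)) \<le> dist x (\<gamma> T') + dist (\<gamma> T') (F \<tau> (\<gamma> t))"
            by (rule dist_triangle)
          also have "\<dots> < 4 * \<epsilon>" using dT' c1 True assms(2) by (simp add: dist_commute)
          finally show ?thesis using False True unfolding \<gamma>'_def by simp
        qed
      qed
    qed
    obtain S where S: "finite S" "S \<subseteq> {0..T}"
      "\<forall>t\<in>{0..T} - S. continuous (at t within {0..T}) \<gamma>"
      "\<forall>t\<in>S. (0 < t \<longrightarrow> (\<exists>l. (\<gamma> \<longlongrightarrow> l) (at_left t))) \<and>
                (t < T \<longrightarrow> (\<exists>l. (\<gamma> \<longlongrightarrow> l) (at_right t)))"
      using pc unfolding piecewise_continuous_on_def by blast
    have pc': "piecewise_continuous_on 0 T' \<gamma>'"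
      unfolding piecewise_continuous_on_def
    proof (intro exI[of _ "insert T' (S \<inter> {0..T'})"] conjI ballI)
      show "finite (insert T' (S \<inter> {0..T'}))" using S by auto
      show "insert T' (S \<inter> {0..T'}) \<subseteq> {0..T'}" using T' by auto
    next
      fix t assume t: "t \<in> {0..T'} - insert T' (S \<inter> {0..T'})"
      then have "continuous (at t within {0..T}) \<gamma>" using S T' by auto
      then have "(\<gamma> \<longlongrightarrow> \<gamma> t) (at t within {0..T'})"
        unfolding continuous_within by (rule tendsto_within_subset) (use T' in auto)
      then have "(\<gamma>' \<longlongrightarrow> \<gamma> t) (at t within {0..T'})"
        by (rule Lim_transform_within[where d="T' - t"])
           (use t in \<open>auto simp: \<gamma>'_def dist_real_def\<close>)
      then show "continuous (at t within {0..T'}) \<gamma>'"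
        using t unfolding continuous_within \<gamma>'_def by auto
    next
      fix t assume t: "t \<in> insert T' (S \<inter> {0..T'})"
      show "0 < t \<longrightarrow> (\<exists>l. (\<gamma>' \<longlongrightarrow> l) (at_left t))"
      proof
        assume "0 < t"
        then obtain l where l: "(\<gamma> \<longlongrightarrow> l) (at_left t)"
          using pc_left_lim[OF pc, of t] t T' by auto
        have "\<forall>\<^sub>F y in at_left t. \<gamma> y = \<gamma>' y"
          unfolding eventually_at_left_field using t T' \<open>0 < t\<close>
          by (intro exI[of _ 0]) (auto simp: \<gamma>'_def)
        then show "\<exists>l. (\<gamma>' \<longlongrightarrow> l) (at_left t)" using l Lim_transform_eventually by blast
      qed
    next
      fix t assume t: "t \<in> insert T' (S \<inter> {0..T'})"
      show "t < T' \<longrightarrow> (\<exists>l. (\<gamma>' \<longlongrightarrow> l) (at_right t))"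
      proof
        assume "t < T'"
        then have "t \<in> S" "t < T" using t T' by auto
        then obtain l where l: "(\<gamma> \<longlongrightarrow> l) (at_right t)" using S(4) by blast
        have "\<forall>\<^sub>F y in at_right t. \<gamma> y = \<gamma>' y"
          unfolding eventually_at_right_field using \<open>t < T'\<close>
          by (intro exI[of _ T']) (auto simp: \<gamma>'_def)
        then show "\<exists>l. (\<gamma>' \<longlongrightarrow> l) (at_right t)" using l Lim_transform_eventually by blast
      qed
    qed
    show "\<exists>\<gamma>'. eps_chain (4 * \<epsilon>) F x x T' \<gamma>'"
      by (rule exI[of _ \<gamma>']) (use T' pc' close g0 in \<open>auto simp: eps_chain_def \<gamma>'_def\<close>)
  qed
qed

end
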